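(* Let $G$ and $H$ be graphs with no isolated vertices. Then $$\gamma_{oir2}(G\times H)\leq \min\{\gamma_{oir2}(H)\,|V(G)|,\ \gamma_{oir2}(G)\,|V(H)|\}.$$
   Context: All graphs are finite and simple. For a graph $G$, a function $f:V(G)\to\mathcal{P}(\{1,2\})$ is an outer-independent 2-rainbow dominating function (OI2RD function) if every vertex $v$ with $f(v)=\emptyset$ satisfies $\bigcup_{u\in N(v)}f(u)=\{1,2\}$ and the set $\{v: f(v)=\emptyset\}$ is independent. The weight of $f$ is $\sum_{v}|f(v)|$ and $\gamma_{oir2}(G)$ is the minimum weight of an OI2RD function of $G$. The direct product $G\times H$ has vertex set $V(G)\times V(H)$, with $(x,y)(x',y')$ an edge iff $xx'\in E(G)$ and $yy'\in E(H)$. *)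

theory Defs
  imports Main
begin

definition fin_graph :: "'a set \<Rightarrow> ('a \<Rightarrow> 'a \<Rightarrow> bool) \<Rightarrow> bool" where
  "fin_graph V E \<longleftrightarrow> finite V \<and> (\<forall>x y. E x y \<longrightarrow> x \<in> V \<and> y \<in> V)
     \<and> (\<forall>x y. E x y \<longrightarrow> E y x) \<and> (\<forall>x. \<not> E x x)"

definition no_isolated :: "'a set \<Rightarrow> ('a \<Rightarrow> 'a \<Rightarrow> bool) \<Rightarrow> bool" where
  "no_isolated V E \<longleftrightarrow> (\<forall>v\<in>V. \<exists>u. E v u)"

definition nbhd :: "'a set \<Rightarrow> ('a \<Rightarrow> 'a \<Rightarrow> bool) \<Rightarrow> 'a \<Rightarrow> 'a set" where
  "nbhd V E v = {u \<in> V. E v u}"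

text \<open>Outer-independent 2-rainbow dominating function. Labels are subsets of {1,2};
  f is required to be empty outside V so that the weight is determined on V.\<close>
definition oi2rdf :: "'a set \<Rightarrow> ('a \<Rightarrow> 'a \<Rightarrow> bool) \<Rightarrow> ('a \<Rightarrow> nat set) \<Rightarrow> bool" where
  "oi2rdf V E f \<longleftrightarrow> (\<forall>v. f v \<subseteq> {1,2}) \<and> (\<forall>v. v \<notin> V \<longrightarrow> f v = {})
     \<and> (\<forall>v\<in>V. f v = {} \<longrightarrow> (\<Union>u\<in>nbhd V E v. f u) = {1,2})
     \<and> (\<forall>u\<in>V. \<forall>v\<in>V. f u = {} \<and> f v = {} \<longrightarrow> \<not> E u v)"

definition weight :: "'a set \<Rightarrow> ('a \<Rightarrow> nat set) \<Rightarrow> nat" where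
  "weight V f = (\<Sum>v\<in>V. card (f v))"

definition gamma_oir2 :: "'a set \<Rightarrow> ('a \<Rightarrow> 'a \<Rightarrow> bool) \<Rightarrow> nat" where
  "gamma_oir2 V E = Min {weight V f | f. oi2rdf V E f}"

definition dprod_V :: "'a set \<Rightarrow> 'b set \<Rightarrow> ('a \<times> 'b) set" where
  "dprod_V VG VH = VG \<times> VH"

definition dprod_E :: "('a \<Rightarrow> 'a \<Rightarrow> bool) \<Rightarrow> ('b \<Rightarrow> 'b \<Rightarrow> bool) \<Rightarrow> ('a \<times> 'b) \<Rightarrow> ('a \<times> 'b) \<Rightarrow> bool" where
  "dprod_E EG EH p q \<longleftrightarrow> EG (fst p) (fst q) \<and> EH (snd p) (snd q)"

end

theory Submission
  imports Defs
begin

lemma weight_bound: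
  assumes "oi2rdf V E f" "finite V"
  shows "weight V f \<le> 2 * card V"
proof -
  have "\<And>v. card (f v) \<le> 2"
  proof -
    fix v have "f v \<subseteq> {1,2}" using assms(1) unfolding oi2rdf_def by blast
    hence "card (f v) \<le> card {1::nat,2}" by (intro card_mono) auto
    thus "card (f v) \<le> 2" by simp
  qed
  hence "weight V f \<le> (\<Sum>v\<in>V. 2)" unfolding weight_def by (intro sum_mono) auto
  thus ?thesis by simp
qed

lemma weights_finite:
  assumes "finite V"
  shows "finite {weight V f | f. oi2rdf V E f}"
  by (rule finite_subset[of _ "{..2 * card V}"]) (use weight_bound assms in auto)

lemma gamma_le:
  assumes "finite V" "oi2rdf V E f"
  shows "gamma_oir2 V E \<le> weight V f"
  unfolding gamma_oir2_def using assms weights_finite[OF assms(1), of E]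
  by (intro Min_le) auto

lemma exists_oi:
  assumes "fin_graph V E" "no_isolated V E"
  shows "oi2rdf V E (\<lambda>v. if v \<in> V then {1,2} else {})"
  unfolding oi2rdf_def by auto

lemma gamma_attained:
  assumes "fin_graph V E" "no_isolated V E"
  shows "\<exists>f. oi2rdf V E f \<and> weight V f = gamma_oir2 V E"
proof -
  have fin: "finite V" using assms(1) unfolding fin_graph_def by auto
  have ne: "{weight V f | f. oi2rdf V E f} \<noteq> {}" using exists_oi[OF assms] by blast
  have "gamma_oir2 V E \<in> {weight V f | f. oi2rdf V E f}"
    unfolding gamma_oir2_def by (rule Min_in[OF weights_finite[OF fin] ne])
  thus ?thesis by auto
qed

lemma left_bound:
  assumes G: "fin_graph VG EG" and H: "fin_graph VH EH"
    and nG: "no_isolated VG EG" and nH: "no_isolated VH EH"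
  shows "gamma_oir2 (dprod_V VG VH) (dprod_E EG EH) \<le> gamma_oir2 VH EH * card VG"
proof -
  obtain f where f: "oi2rdf VH EH f" and w: "weight VH f = gamma_oir2 VH EH"
    using gamma_attained[OF H nH] by blast
  define F where "F = (\<lambda>p::'a\<times>'b. if fst p \<in> VG then f (snd p) else {})"
  have finG: "finite VG" and finH: "finite VH" using G H unfolding fin_graph_def by auto
  have f1: "\<forall>v. f v \<subseteq> {1,2}" and f2: "\<forall>v. v \<notin> VH \<longrightarrow> f v = {}"
    and f3: "\<forall>v\<in>VH. f v = {} \<longrightarrow> (\<Union>u\<in>nbhd VH EH v. f u) = {1,2}"
    and f4: "\<forall>u\<in>VH. \<forall>v\<in>VH. f u = {} \<and> f v = {} \<longrightarrow> \<not> EH u v"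
    using f unfolding oi2rdf_def by blast+
  have "oi2rdf (dprod_V VG VH) (dprod_E EG EH) F"
    unfolding oi2rdf_def
  proof (intro conjI allI ballI impI)
    fix v show "F v \<subseteq> {1,2}" using f1 unfolding F_def by auto
  next
    fix v assume "v \<notin> dprod_V VG VH" thus "F v = {}" using f2 unfolding F_def dprod_V_def
      by (cases v) auto
  next
    fix v assume v: "v \<in> dprod_V VG VH" and e: "F v = {}"
    obtain g h where vgh: "v = (g,h)" by (cases v)
    have g: "g \<in> VG" and h: "h \<in> VH" using v vgh unfolding dprod_V_def by auto
    have fh: "f h = {}" using e g unfolding F_def vgh by auto
    obtain g' where g': "EG g g'" using nG g unfolding no_isolated_def by blast
    have g'V: "g' \<in> VG" using G g' unfolding fin_graph_def by blast
    have sub: "{1,2} \<subseteq> (\<Union>u\<in>nbhd (dprod_V VG VH) (dprod_E EG EH) v. F u)"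
    proof
      fix x assume "x \<in> ({1,2}::nat set)"
      then obtain h' where h': "h' \<in> nbhd VH EH h" "x \<in> f h'" using f3 h fh by blast
      have "(g',h') \<in> nbhd (dprod_V VG VH) (dprod_E EG EH) v"
        using h' g' g'V unfolding nbhd_def dprod_V_def dprod_E_def vgh by auto
      moreover have "x \<in> F (g',h')" using h' g'V unfolding F_def by auto
      ultimately show "x \<in> (\<Union>u\<in>nbhd (dprod_V VG VH) (dprod_E EG EH) v. F u)" by blast
    qed
    have "(\<Union>u\<in>nbhd (dprod_V VG VH) (dprod_E EG EH) v. F u) \<subseteq> {1,2}"
      using f1 unfolding F_def by auto
    with sub show "(\<Union>u\<in>nbhd (dprod_V VG VH) (dprod_E EG EH) v. F u) = {1,2}" by blast
  next
    fix u v assume u: "u \<in> dprod_V VG VH" and v: "v \<in> dprod_V VG VH"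
      and e: "F u = {} \<and> F v = {}"
    show "\<not> dprod_E EG EH u v"
      using u v e f4 unfolding F_def dprod_V_def dprod_E_def by (cases u; cases v) auto
  qed
  hence "gamma_oir2 (dprod_V VG VH) (dprod_E EG EH) \<le> weight (dprod_V VG VH) F"
    using finG finH by (intro gamma_le) (auto simp: dprod_V_def)
  also have "weight (dprod_V VG VH) F = (\<Sum>(g,h)\<in>VG \<times> VH. card (f h))"
    unfolding weight_def dprod_V_def F_def by (intro sum.cong) auto
  also have "\<dots> = (\<Sum>g\<in>VG. \<Sum>h\<in>VH. card (f h))"
    by (rule sum.cartesian_product[symmetric])
  also have "\<dots> = card VG * gamma_oir2 VH EH" using w by (simp add: weight_def)
  finally show ?thesis by (simp add: mult.commute)
qed

lemma right_bound:
  assumes G: "fin_graph VG EG" and H: "fin_graph VH EH"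
    and nG: "no_isolated VG EG" and nH: "no_isolated VH EH"
  shows "gamma_oir2 (dprod_V VG VH) (dprod_E EG EH) \<le> gamma_oir2 VG EG * card VH"
proof -
  obtain f where f: "oi2rdf VG EG f" and w: "weight VG f = gamma_oir2 VG EG"
    using gamma_attained[OF G nG] by blast
  define F where "F = (\<lambda>p::'a\<times>'b. if snd p \<in> VH then f (fst p) else {})"
  have finG: "finite VG" and finH: "finite VH" using G H unfolding fin_graph_def by auto
  have f1: "\<forall>v. f v \<subseteq> {1,2}" and f2: "\<forall>v. v \<notin> VG \<longrightarrow> f v = {}"
    and f3: "\<forall>v\<in>VG. f v = {} \<longrightarrow> (\<Union>u\<in>nbhd VG EG v. f u) = {1,2}"
    and f4: "\<forall>u\<in>VG. \<forall>v\<in>VG. f u = {} \<and> f v = {} \<longrightarrow> \<not> EG u v"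
    using f unfolding oi2rdf_def by blast+
  have "oi2rdf (dprod_V VG VH) (dprod_E EG EH) F"
    unfolding oi2rdf_def
  proof (intro conjI allI ballI impI)
    fix v show "F v \<subseteq> {1,2}" using f1 unfolding F_def by auto
  next
    fix v assume "v \<notin> dprod_V VG VH" thus "F v = {}" using f2 unfolding F_def dprod_V_def
      by (cases v) auto
  next
    fix v assume v: "v \<in> dprod_V VG VH" and e: "F v = {}"
    obtain g h where vgh: "v = (g,h)" by (cases v)
    have g: "g \<in> VG" and h: "h \<in> VH" using v vgh unfolding dprod_V_def by auto
    have fg: "f g = {}" using e h unfolding F_def vgh by auto
    obtain h' where h': "EH h h'" using nH h unfolding no_isolated_def by blast
    have h'V: "h' \<in> VH" using H h' unfolding fin_graph_def by blast
    have sub: "{1,2} \<subseteq> (\<Union>u\<in>nbhd (dprod_V VG VH) (dprod_E EG EH) v. F u)"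
    proof
      fix x assume "x \<in> ({1,2}::nat set)"
      then obtain g' where g': "g' \<in> nbhd VG EG g" "x \<in> f g'" using f3 g fg by blast
      have "(g',h') \<in> nbhd (dprod_V VG VH) (dprod_E EG EH) v"
        using g' h' h'V unfolding nbhd_def dprod_V_def dprod_E_def vgh by auto
      moreover have "x \<in> F (g',h')" using g' h'V unfolding F_def by auto
      ultimately show "x \<in> (\<Union>u\<in>nbhd (dprod_V VG VH) (dprod_E EG EH) v. F u)" by blast
    qed
    have "(\<Union>u\<in>nbhd (dprod_V VG VH) (dprod_E EG EH) v. F u) \<subseteq> {1,2}"
      using f1 unfolding F_def by auto
    with sub show "(\<Union>u\<in>nbhd (dprod_V VG VH) (dprod_E EG EH) v. F u) = {1,2}" by blast
  next
    fix u v assume u: "u \<in> dprod_V VG VH" and v: "v \<in> dprod_V VG VH"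
      and e: "F u = {} \<and> F v = {}"
    show "\<not> dprod_E EG EH u v"
      using u v e f4 unfolding F_def dprod_V_def dprod_E_def by (cases u; cases v) auto
  qed
  hence "gamma_oir2 (dprod_V VG VH) (dprod_E EG EH) \<le> weight (dprod_V VG VH) F"
    using finG finH by (intro gamma_le) (auto simp: dprod_V_def)
  also have "weight (dprod_V VG VH) F = (\<Sum>(g,h)\<in>VG \<times> VH. card (f g))"
    unfolding weight_def dprod_V_def F_def by (intro sum.cong) auto
  also have "\<dots> = (\<Sum>g\<in>VG. \<Sum>h\<in>VH. card (f g))"
    by (rule sum.cartesian_product[symmetric])
  also have "\<dots> = card VH * gamma_oir2 VG EG" using w
    by (simp add: weight_def sum_distrib_left[symmetric])
  finally show ?thesis by (simp add: mult.commute)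
qed

theorem theorem2:
  fixes VG :: "'a set" and EG :: "'a \<Rightarrow> 'a \<Rightarrow> bool"
    and VH :: "'b set" and EH :: "'b \<Rightarrow> 'b \<Rightarrow> bool"
  assumes "fin_graph VG EG" and "fin_graph VH EH"
    and "no_isolated VG EG" and "no_isolated VH EH"
  shows "gamma_oir2 (dprod_V VG VH) (dprod_E EG EH)
           \<le> min (gamma_oir2 VH EH * card VG) (gamma_oir2 VG EG * card VH)"
  using left_bound[OF assms] right_bound[OF assms] by simp

end
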